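(* Let $\mu_1:\mathrm{Sym}^-\to B_2$ be an arbitrary measure, fix $a\in\mathbb R\cup\{\infty\}$ and define $g:\mathbb R\cup\{\infty\}\to B_2$ by $g(t)=\mu_1([[a,t)))$. (a) $g$ is left continuous on $\mathbb R\cup\{\infty\}$: for every $t\in\mathbb R\cup\{\infty\}$ there exists a real $t'<t$ such that $g(\xi)=g(t)$ for all $\xi\in(t',t)$. (b) $\mu_1$ is the left Lebesgue–Stieltjes measure associated to $g$, i.e. $\mu_1\big([[a_1,b_1))\Delta\cdots\Delta[[a_n,b_n))\big)=g(a_1)\oplus g(b_1)\oplus\cdots\oplus g(a_n)\oplus g(b_n)$ for all $a_1,\dots,a_n,b_1,\dots,b_n\in\mathbb R\cup\{\infty\}$.
   Context: $B_2=\{0,1\}$, $\oplus$ addition modulo 2, $\Delta$ symmetric difference. For $a,b\in\mathbb R\cup\{\infty\}$: $[[a,b))=[a,b)$ if $a<b$, $[b,a)$ if $b<a$, $\emptyset$ if $a=b$. $\mathrm{Sym}^-$ is the family of subsets of $\mathbb R$ generated by these intervals under $\Delta$ and $\cap$. $\mu_1$ is a measure if for every sequence of pairwise disjoint sets of $\mathrm{Sym}^-$ whose union lies in $\mathrm{Sym}^-$, only finitely many have $\mu_1$-value 1 and $\mu_1$ of the union is their number modulo 2. *)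

theory Defs
  imports "HOL-Analysis.Analysis" "HOL-Library.Z2"
begin

text \<open>Points of R \<union> {\<infinity>} are represented by extended reals different from -\<infinity>.
  B_2 is the two-element field bit (HOL-Library.Z2), whose addition is addition mod 2.\<close>

definition symdiff :: "'a set \<Rightarrow> 'a set \<Rightarrow> 'a set" where
  "symdiff A B = (A - B) \<union> (B - A)"

definition sintv :: "ereal \<Rightarrow> ereal \<Rightarrow> real set" where
  "sintv a b = (if a < b then {x. a \<le> ereal x \<and> ereal x < b}
                else if b < a then {x. b \<le> ereal x \<and> ereal x < a}
                else {})"

inductive_set SymMinus :: "real set set" where
  intv: "a \<noteq> -\<infinity> \<Longrightarrow> b \<noteq> -\<infinity> \<Longrightarrow> sintv a b \<in> SymMinus"
| sdiff: "A \<in> SymMinus \<Longrightarrow> B \<in> SymMinus \<Longrightarrow> symdiff A B \<in> SymMinus"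
| inter: "A \<in> SymMinus \<Longrightarrow> B \<in> SymMinus \<Longrightarrow> A \<inter> B \<in> SymMinus"

definition is_B2_measure :: "(real set \<Rightarrow> bit) \<Rightarrow> bool" where
  "is_B2_measure \<mu> \<longleftrightarrow>
     (\<forall>A :: nat \<Rightarrow> real set.
        (\<forall>n. A n \<in> SymMinus) \<and> disjoint_family A \<and> (\<Union>n. A n) \<in> SymMinus \<longrightarrow>
          finite {n. \<mu> (A n) = 1} \<and> \<mu> (\<Union>n. A n) = of_nat (card {n. \<mu> (A n) = 1}))"

fun bigsymdiff :: "nat \<Rightarrow> (nat \<Rightarrow> 'a set) \<Rightarrow> 'a set" where
  "bigsymdiff 0 F = {}"
| "bigsymdiff (Suc n) F = symdiff (bigsymdiff n F) (F n)"

end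

theory Submission
  imports Defs
begin

lemma mem_sintv: "x \<in> sintv a b \<longleftrightarrow> ((a \<le> ereal x) \<noteq> (b \<le> ereal x))"
  unfolding sintv_def by auto

lemma sintv_split: "sintv b c = symdiff (sintv a b) (sintv a c)"
  unfolding symdiff_def by (auto simp: mem_sintv)

lemma empty_Sym: "{} \<in> SymMinus"
proof -
  have "sintv 0 0 \<in> SymMinus" by (rule SymMinus.intv) auto
  moreover have "sintv 0 0 = {}" by (simp add: sintv_def)
  ultimately show ?thesis by simp
qed

lemma mu_empty:
  assumes meas: "is_B2_measure \<mu>"
  shows "\<mu> {} = 0"
proof (rule ccontr)
  assume "\<mu> {} \<noteq> 0"
  hence h: "\<mu> {} = 1" by simp
  have "finite {n::nat. \<mu> ((\<lambda>n. {}) n) = 1}"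
    using meas[unfolded is_B2_measure_def, rule_format, of "\<lambda>n. {}"] empty_Sym
    by (auto simp: disjoint_family_on_def)
  with h show False by simp
qed

lemma mu_add:
  assumes meas: "is_B2_measure \<mu>"
    and A: "A \<in> SymMinus" and B: "B \<in> SymMinus" and U: "A \<union> B \<in> SymMinus"
    and d: "A \<inter> B = {}"
  shows "\<mu> (A \<union> B) = \<mu> A + \<mu> B"
proof -
  define F where "F = (\<lambda>n::nat. if n = 0 then A else if n = 1 then B else {})"
  have FS: "\<forall>n. F n \<in> SymMinus" using A B empty_Sym by (simp add: F_def)
  have dj: "disjoint_family F" using d
    by (auto simp: disjoint_family_on_def F_def)
  have UF: "(\<Union>n. F n) = A \<union> B"
  proof
    show "(\<Union>n. F n) \<subseteq> A \<union> B" by (auto simp: F_def split: if_splits)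
    show "A \<union> B \<subseteq> (\<Union>n. F n)"
    proof -
      have "F 0 = A" "F 1 = B" by (auto simp: F_def)
      thus ?thesis by (metis Un_least UN_upper UNIV_I)
    qed
  qed
  have m: "\<mu> (\<Union>n. F n) = of_nat (card {n. \<mu> (F n) = 1})"
    using meas[unfolded is_B2_measure_def, rule_format, of F] FS dj UF U by auto
  have e: "\<mu> {} = 0" using mu_empty[OF meas] .
  have S: "{n. \<mu> (F n) = 1} = (if \<mu> A = 1 then {0} else {}) \<union> (if \<mu> B = 1 then {1} else {})"
    using e by (auto simp: F_def split: if_splits)
  show ?thesis using m UF S
    by (cases "\<mu> A"; cases "\<mu> B") auto
qed

lemma mu_symdiff:
  assumes meas: "is_B2_measure \<mu>"
    and A: "A \<in> SymMinus" and B: "B \<in> SymMinus"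
  shows "\<mu> (symdiff A B) = \<mu> A + \<mu> B"
proof -
  have I: "A \<inter> B \<in> SymMinus" using A B by (rule SymMinus.inter)
  have AB: "A - B \<in> SymMinus"
  proof -
    have "symdiff A (A \<inter> B) = A - B" by (auto simp: symdiff_def)
    thus ?thesis using SymMinus.sdiff[OF A I] by simp
  qed
  have BA: "B - A \<in> SymMinus"
  proof -
    have "symdiff B (A \<inter> B) = B - A" by (auto simp: symdiff_def)
    thus ?thesis using SymMinus.sdiff[OF B I] by simp
  qed
  have S: "symdiff A B \<in> SymMinus" using A B by (rule SymMinus.sdiff)
  have 1: "\<mu> A = \<mu> (A - B) + \<mu> (A \<inter> B)"
    using mu_add[OF meas AB I] A by (metis Diff_Int_distrib2 Diff_disjoint Int_Diff_Un Un_Diff_Int inf_commute Int_Diff)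
  have 2: "\<mu> B = \<mu> (B - A) + \<mu> (A \<inter> B)"
    using mu_add[OF meas BA I] B by (metis Diff_disjoint Int_Diff Un_Diff_Int inf_commute inf_left_commute)
  have 3: "\<mu> (symdiff A B) = \<mu> (A - B) + \<mu> (B - A)"
  proof -
    have "symdiff A B = (A - B) \<union> (B - A)" by (simp add: symdiff_def)
    moreover have "(A - B) \<inter> (B - A) = {}" by auto
    ultimately show ?thesis using mu_add[OF meas AB BA] S by simp
  qed
  show ?thesis using 1 2 3
    by (cases "\<mu> (A - B)"; cases "\<mu> (B - A)"; cases "\<mu> (A \<inter> B)") auto
qed

lemma sintv_Sym: "a \<noteq> -\<infinity> \<Longrightarrow> b \<noteq> -\<infinity> \<Longrightarrow> sintv a b \<in> SymMinus"
  by (rule SymMinus.intv)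

lemma bigsymdiff_mu:
  assumes meas: "is_B2_measure \<mu>"
  shows "(\<forall>i<n. F i \<in> SymMinus) \<Longrightarrow>
     bigsymdiff n F \<in> SymMinus \<and> \<mu> (bigsymdiff n F) = (\<Sum>i<n. \<mu> (F i))"
proof (induction n)
  case 0
  then show ?case using empty_Sym mu_empty[OF meas] by simp
next
  case (Suc n)
  hence IH: "bigsymdiff n F \<in> SymMinus" "\<mu> (bigsymdiff n F) = (\<Sum>i<n. \<mu> (F i))"
    and Fn: "F n \<in> SymMinus" by auto
  show ?case using SymMinus.sdiff[OF IH(1) Fn] mu_symdiff[OF meas IH(1) Fn] IH(2) by simp
qed

lemma mu_sintv:
  assumes meas: "is_B2_measure \<mu>" and a: "a \<noteq> -\<infinity>" and b: "b \<noteq> -\<infinity>" and c: "c \<noteq> -\<infinity>"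
  shows "\<mu> (sintv b c) = \<mu> (sintv a b) + \<mu> (sintv a c)"
  using mu_symdiff[OF meas sintv_Sym[OF a b] sintv_Sym[OF a c]] sintv_split[of b c a] by simp

theorem theorem6p7:
  fixes \<mu> :: "real set \<Rightarrow> bit" and a :: ereal and g :: "ereal \<Rightarrow> bit"
  assumes meas: "is_B2_measure \<mu>"
    and a: "a \<noteq> -\<infinity>"
    and g_def: "\<And>t. g t = \<mu> (sintv a t)"
  shows "(\<forall>t. t \<noteq> -\<infinity> \<longrightarrow>
            (\<exists>t'::real. ereal t' < t \<and>
               (\<forall>\<xi>::real. t' < \<xi> \<and> ereal \<xi> < t \<longrightarrow> g (ereal \<xi>) = g t)))
       \<and> (\<forall>(n::nat) (as::nat \<Rightarrow> ereal) (bs::nat \<Rightarrow> ereal).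
            (\<forall>i<n. as i \<noteq> -\<infinity> \<and> bs i \<noteq> -\<infinity>) \<longrightarrow>
            \<mu> (bigsymdiff n (\<lambda>i. sintv (as i) (bs i))) = (\<Sum>i<n. g (as i) + g (bs i)))"
proof (intro conjI allI impI)
  fix n and as bs :: "nat \<Rightarrow> ereal"
  assume h: "\<forall>i<n. as i \<noteq> -\<infinity> \<and> bs i \<noteq> -\<infinity>"
  have "\<mu> (bigsymdiff n (\<lambda>i. sintv (as i) (bs i))) = (\<Sum>i<n. \<mu> (sintv (as i) (bs i)))"
    using bigsymdiff_mu[OF meas, of n "\<lambda>i. sintv (as i) (bs i)"] h sintv_Sym by auto
  also have "\<dots> = (\<Sum>i<n. g (as i) + g (bs i))"
    using h by (intro sum.cong refl) (simp add: g_def mu_sintv[OF meas a])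
  finally show "\<mu> (bigsymdiff n (\<lambda>i. sintv (as i) (bs i))) = (\<Sum>i<n. g (as i) + g (bs i))" .
next
  fix t :: ereal
  assume t: "t \<noteq> -\<infinity>"
  show "\<exists>t'::real. ereal t' < t \<and>
               (\<forall>\<xi>::real. t' < \<xi> \<and> ereal \<xi> < t \<longrightarrow> g (ereal \<xi>) = g t)"
  proof (rule ccontr)
    assume neg: "\<not> (\<exists>t'::real. ereal t' < t \<and>
               (\<forall>\<xi>::real. t' < \<xi> \<and> ereal \<xi> < t \<longrightarrow> g (ereal \<xi>) = g t))"
    have H: "\<And>s::real. ereal s < t \<Longrightarrow> \<exists>\<xi>::real. s < \<xi> \<and> ereal \<xi> < t \<and> \<mu> (sintv (ereal \<xi>) t) = 1"
    proof -
      fix s :: real assume "ereal s < t"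
      then obtain \<xi> :: real where "s < \<xi>" "ereal \<xi> < t" "g (ereal \<xi>) \<noteq> g t"
        using neg by blast
      moreover have "\<mu> (sintv (ereal \<xi>) t) = g (ereal \<xi>) + g t"
        using mu_sintv[OF meas a _ t, of "ereal \<xi>"] g_def by simp
      ultimately show "\<exists>\<xi>::real. s < \<xi> \<and> ereal \<xi> < t \<and> \<mu> (sintv (ereal \<xi>) t) = 1"
        by (cases "g (ereal \<xi>)"; cases "g t") auto
    qed
    define L where "L = (\<lambda>n::nat. if t = \<infinity> then real n else real_of_ereal t - inverse (real (Suc n)))"
    have Lt: "ereal (L n) < t" for n
      using t by (cases t) (auto simp: L_def)
    define P where "P = (\<lambda>s \<xi>::real. s < \<xi> \<and> ereal \<xi> < t \<and> \<mu> (sintv (ereal \<xi>) t) = 1)"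
    have Pex: "ereal s < t \<Longrightarrow> P s (SOME \<xi>. P s \<xi>)" for s
      using H[of s] unfolding P_def by (metis (mono_tags, lifting) someI)
    define \<xi> where "\<xi> = rec_nat (SOME x. P (L 0) x) (\<lambda>n x. SOME y. P (max x (L (Suc n))) y)"
    have \<xi>0: "\<xi> 0 = (SOME x. P (L 0) x)" by (simp add: \<xi>_def)
    have \<xi>S: "\<xi> (Suc n) = (SOME y. P (max (\<xi> n) (L (Suc n))) y)" for n by (simp add: \<xi>_def)
    have Pn: "P (if n = 0 then L 0 else max (\<xi> (n - 1)) (L n)) (\<xi> n)" for n
    proof (induction n)
      case 0 show ?case using Pex[OF Lt[of 0]] \<xi>0 by simp
    next
      case (Suc n)
      have "ereal (\<xi> n) < t" using Suc unfolding P_def by simp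
      hence "ereal (max (\<xi> n) (L (Suc n))) < t" using Lt[of "Suc n"] by (simp add: max_def)
      then show ?case using Pex \<xi>S[of n] by simp
    qed
    have lt_t: "ereal (\<xi> n) < t" and mu1: "\<mu> (sintv (ereal (\<xi> n)) t) = 1" and gtL: "L n < \<xi> n" for n
      using Pn[of n] unfolding P_def by (auto split: if_splits)
    have inc: "\<xi> n < \<xi> (Suc n)" for n
      using Pn[of "Suc n"] unfolding P_def by simp
    have mono: "m \<le> n \<Longrightarrow> \<xi> m \<le> \<xi> n" for m n
      using inc by (metis less_imp_le lift_Suc_mono_le)
    define A where "A = (\<lambda>n. sintv (ereal (\<xi> n)) (ereal (\<xi> (Suc n))))"
    have A_eq: "A n = {x. \<xi> n \<le> x \<and> x < \<xi> (Suc n)}" for n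
      using inc[of n] by (auto simp: A_def sintv_def)
    have AS: "\<forall>n. A n \<in> SymMinus" unfolding A_def by (auto intro: sintv_Sym)
    have dj: "disjoint_family A"
    proof (unfold disjoint_family_on_def, intro ballI impI)
      fix m n :: nat assume "m \<noteq> n"
      then consider "m < n" | "n < m" by linarith
      then show "A m \<inter> A n = {}"
      proof cases
        case 1 hence "\<xi> (Suc m) \<le> \<xi> n" using mono by simp
        thus ?thesis by (auto simp: A_eq)
      next
        case 2 hence "\<xi> (Suc n) \<le> \<xi> m" using mono by simp
        thus ?thesis by (auto simp: A_eq)
      qed
    qed
    have UA: "(\<Union>n. A n) = sintv (ereal (\<xi> 0)) t"
    proof
      show "(\<Union>n. A n) \<subseteq> sintv (ereal (\<xi> 0)) t"
      proof
        fix x assume "x \<in> (\<Union>n. A n)"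
        then obtain n where "\<xi> n \<le> x" "x < \<xi> (Suc n)" by (auto simp: A_eq)
        moreover have "\<xi> 0 \<le> \<xi> n" using mono by simp
        moreover have "ereal (\<xi> (Suc n)) < t" by (rule lt_t)
        ultimately have "ereal x < t" "ereal (\<xi> 0) \<le> ereal x"
          using less_trans[of "ereal x" "ereal (\<xi> (Suc n))" t] by auto
        thus "x \<in> sintv (ereal (\<xi> 0)) t"
          using lt_t[of 0] by (auto simp: mem_sintv)
      qed
    next
      show "sintv (ereal (\<xi> 0)) t \<subseteq> (\<Union>n. A n)"
      proof
        fix x assume x: "x \<in> sintv (ereal (\<xi> 0)) t"
        hence x0: "\<xi> 0 \<le> x" and xt: "ereal x < t" using lt_t[of 0] by (auto simp: sintv_def)
        have "\<exists>n. x < \<xi> n"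
        proof (cases "t = \<infinity>")
          case True
          obtain n where "x < real n" using reals_Archimedean2 by blast
          thus ?thesis using gtL[of n] True by (auto simp: L_def intro: less_trans)
        next
          case False
          with t xt obtain r where r: "t = ereal r" "x < r" by (cases t) auto
          obtain n where "inverse (real (Suc n)) < r - x" using reals_Archimedean[of "r - x"] r by auto
          hence "x < \<xi> n" using gtL[of n] r False by (auto simp: L_def)
          thus ?thesis by blast
        qed
        hence ex: "\<exists>n. x < \<xi> (Suc n)" by (metis inc less_trans)
        define n where "n = (LEAST n. x < \<xi> (Suc n))"
        have n1: "x < \<xi> (Suc n)" unfolding n_def by (rule LeastI_ex[OF ex])
        have n2: "\<xi> n \<le> x"
        proof (cases n)
          case 0 thus ?thesis using x0 by simp
        next
          case (Suc m)
          have "\<not> x < \<xi> (Suc m)" using not_less_Least[of m "\<lambda>n. x < \<xi> (Suc n)"] Suc n_def by simp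
          thus ?thesis using Suc by simp
        qed
        show "x \<in> (\<Union>n. A n)" using n1 n2 by (auto simp: A_eq)
      qed
    qed
    have A0: "\<mu> (A n) = 0" for n
    proof -
      have "\<mu> (A n) = \<mu> (sintv (ereal (\<xi> n)) t) + \<mu> (sintv (ereal (\<xi> (Suc n))) t)"
        unfolding A_def using mu_sintv[OF meas t, of "ereal (\<xi> n)" "ereal (\<xi> (Suc n))"] sintv_split
        by (metis MInfty_neq_ereal(1) add.commute mu_sintv[OF meas] t)
      thus ?thesis using mu1 by simp
    qed
    have "\<mu> (\<Union>n. A n) = of_nat (card {n. \<mu> (A n) = 1})"
      using meas[unfolded is_B2_measure_def, rule_format, of A] AS dj UA sintv_Sym t by auto
    hence "\<mu> (sintv (ereal (\<xi> 0)) t) = 0" using A0 UA by simp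
    thus False using mu1[of 0] by simp
  qed
qed

end
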